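(* Let $a$ be the MMF allocation computed with entitlements $e$ and reported demands $\bar d_1,\dots,\bar d_n$, where $\bar d_i\ge d_i^*$ for all $i$, and let $\underline d_i\le d_i^*$ for all $i$. Then $\ell(d^*,a)\le\sum_{i=1}^n(\bar d_i-d_i^* )\le\sum_{i=1}^n(\bar d_i-\underline d_i)$.
   Context: A divisible resource of size $1$ is shared by $n$ agents with entitlements $e_i>0$, $\sum_ie_i=1$, and true demands $d_i^*\ge0$. MMF$(e,d)$ on reported demands $d_1,\dots,d_n\ge0$: set $r=1$, $E=1$, $S=\{1,\dots,n\}$, $a=0$; process agents $j$ in ascending order of $d_j/e_j$; if $d_j<re_j/E$, set $a_j=d_j$, remove $j$ from $S$, $r\leftarrow r-d_j$, $E\leftarrow E-e_j$ and continue; otherwise set $a_k=re_k/E$ for all $k\in S$ and stop; output $a$. For $d,a\in\mathbb{R}_+^n$: $\ell_{ur}(a)=1-\sum_ia_i$, $\ell_{or}(d,a)=\sum_i(a_i-d_i)^+$, $\ell_{ud}(d,a)=\sum_i(d_i-a_i)^+$, $\ell(d,a)=\min(\ell_{ur}(a)+\ell_{or}(d,a),\ell_{ud}(d,a))$. *)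

theory Defs
  imports Complex_Main
begin

text \<open>Agents are indexed by 0..n-1. The MMF loop processes the remaining agents
  (a list, already sorted by d_j/e_j); r is the remaining resource, E the remaining
  entitlement; the remaining set S is exactly the set of the list.\<close>

fun mmf_loop :: "(nat \<Rightarrow> real) \<Rightarrow> (nat \<Rightarrow> real) \<Rightarrow> real \<Rightarrow> real \<Rightarrow> nat list \<Rightarrow> (nat \<Rightarrow> real)" where
  "mmf_loop e d r E [] = (\<lambda>k. 0)"
| "mmf_loop e d r E (j # js) =
     (if d j < r * e j / E
      then (mmf_loop e d (r - d j) (E - e j) js)(j := d j)
      else (\<lambda>k. if k \<in> set (j # js) then r * e k / E else 0))"

definition MMF :: "nat \<Rightarrow> (nat \<Rightarrow> real) \<Rightarrow> (nat \<Rightarrow> real) \<Rightarrow> (nat \<Rightarrow> real)" where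
  "MMF n e d = mmf_loop e d 1 1 (sort_key (\<lambda>j. d j / e j) [0..<n])"

definition loss_ur :: "nat \<Rightarrow> (nat \<Rightarrow> real) \<Rightarrow> real" where
  "loss_ur n a = 1 - (\<Sum>i<n. a i)"

definition loss_or :: "nat \<Rightarrow> (nat \<Rightarrow> real) \<Rightarrow> (nat \<Rightarrow> real) \<Rightarrow> real" where
  "loss_or n d a = (\<Sum>i<n. max (a i - d i) 0)"

definition loss_ud :: "nat \<Rightarrow> (nat \<Rightarrow> real) \<Rightarrow> (nat \<Rightarrow> real) \<Rightarrow> real" where
  "loss_ud n d a = (\<Sum>i<n. max (d i - a i) 0)"

definition loss :: "nat \<Rightarrow> (nat \<Rightarrow> real) \<Rightarrow> (nat \<Rightarrow> real) \<Rightarrow> real" where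
  "loss n d a = min (loss_ur n a + loss_or n d a) (loss_ud n d a)"

end

theory Submission
  imports Defs
begin

lemma loop_inv:
  assumes "distinct js" "\<And>k. k \<in> set js \<Longrightarrow> e k > 0"
    "E = (\<Sum>k\<in>set js. e k)" "sorted (map (\<lambda>j. d j / e j) js)"
  shows "(\<forall>k\<in>set js. mmf_loop e d r E js k \<le> d k) \<and>
         ((\<forall>k\<in>set js. mmf_loop e d r E js k = d k) \<or> (\<Sum>k\<in>set js. mmf_loop e d r E js k) = r)"
  using assms
proof (induction js arbitrary: r E)
  case Nil
  then show ?case by simp
next
  case (Cons j js)
  have ej: "e j > 0" using Cons.prems by simp
  have nj: "j \<notin> set js" using Cons.prems by simp
  show ?case
  proof (cases "d j < r * e j / E")
    case True
    let ?g = "mmf_loop e d (r - d j) (E - e j) js"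
    have IH: "(\<forall>k\<in>set js. ?g k \<le> d k) \<and>
         ((\<forall>k\<in>set js. ?g k = d k) \<or> (\<Sum>k\<in>set js. ?g k) = r - d j)"
      apply (rule Cons.IH)
      using Cons.prems nj by (auto simp: sum.insert)
    have f: "mmf_loop e d r E (j # js) = ?g(j := d j)" using True by simp
    have s: "(\<Sum>k\<in>set js. (?g(j := d j)) k) = (\<Sum>k\<in>set js. ?g k)"
      by (rule sum.cong) (use nj in auto)
    show ?thesis unfolding f using IH nj s by (auto simp: sum.insert)
  next
    case False
    have f: "mmf_loop e d r E (j # js) = (\<lambda>k. if k \<in> set (j # js) then r * e k / E else 0)"
      using False by simp
    have Epos: "E > 0"
    proof -
      have "(\<Sum>k\<in>set (j#js). e k) > 0"
        by (rule sum_pos) (use Cons.prems in auto)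
      then show ?thesis using Cons.prems by simp
    qed
    have rj: "r / E \<le> d j / e j"
      using False ej by (simp add: field_simps)
    have le: "r * e k / E \<le> d k" if k: "k \<in> set (j#js)" for k
    proof -
      have ek: "e k > 0" using Cons.prems k by auto
      have "d j / e j \<le> d k / e k"
        using k Cons.prems(4) by auto
      with rj have "r / E \<le> d k / e k" by linarith
      then show ?thesis using ek Epos by (simp add: field_simps)
    qed
    have "(\<Sum>k\<in>set (j#js). r * e k / E) = r / E * (\<Sum>k\<in>set (j#js). e k)"
      by (simp add: sum_distrib_left)
    also have "\<dots> = r" using Epos Cons.prems(3) by simp
    finally have sm: "(\<Sum>k\<in>set (j#js). r * e k / E) = r" .
    show ?thesis unfolding f using le sm
      by (simp del: set_simps(2) list.set)
  qed
qed

theorem lemma1: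
  fixes n :: nat and e dstar dbar dlow :: "nat \<Rightarrow> real"
  assumes "\<And>i. i < n \<Longrightarrow> e i > 0"
    and "(\<Sum>i<n. e i) = 1"
    and "\<And>i. i < n \<Longrightarrow> dstar i \<ge> 0"
    and "\<And>i. i < n \<Longrightarrow> dbar i \<ge> dstar i"
    and "\<And>i. i < n \<Longrightarrow> dlow i \<le> dstar i"
  shows "loss n dstar (MMF n e dbar) \<le> (\<Sum>i<n. dbar i - dstar i)
       \<and> (\<Sum>i<n. dbar i - dstar i) \<le> (\<Sum>i<n. dbar i - dlow i)"
proof
  show "(\<Sum>i<n. dbar i - dstar i) \<le> (\<Sum>i<n. dbar i - dlow i)"
    by (rule sum_mono) (use assms(5) in auto)
next
  let ?js = "sort_key (\<lambda>j. dbar j / e j) [0..<n]"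
  let ?a = "MMF n e dbar"
  have setjs: "set ?js = {..<n}" by auto
  have inv: "(\<forall>k\<in>set ?js. ?a k \<le> dbar k) \<and>
         ((\<forall>k\<in>set ?js. ?a k = dbar k) \<or> (\<Sum>k\<in>set ?js. ?a k) = 1)"
    unfolding MMF_def
    apply (rule loop_inv)
    using assms(1,2) by (auto simp: sorted_sort_key atLeast0LessThan)
  hence inv': "(\<forall>k<n. ?a k \<le> dbar k) \<and> ((\<forall>k<n. ?a k = dbar k) \<or> (\<Sum>k<n. ?a k) = 1)"
    unfolding setjs by auto
  have nn: "0 \<le> (\<Sum>i<n. dbar i - dstar i)"
    by (rule sum_nonneg) (use assms(4) in auto)
  show "loss n dstar ?a \<le> (\<Sum>i<n. dbar i - dstar i)"
  proof (cases "\<forall>k<n. ?a k = dbar k")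
    case True
    have "loss_ud n dstar ?a = 0"
      unfolding loss_ud_def using True assms(4) by (auto intro!: sum.neutral)
    then show ?thesis unfolding loss_def using nn by simp
  next
    case False
    with inv' have s: "(\<Sum>k<n. ?a k) = 1" and le: "\<forall>k<n. ?a k \<le> dbar k" by auto
    have "loss_or n dstar ?a \<le> (\<Sum>i<n. dbar i - dstar i)"
      unfolding loss_or_def by (rule sum_mono) (use le assms(4) in auto)
    moreover have "loss_ur n ?a = 0" unfolding loss_ur_def using s by simp
    ultimately show ?thesis unfolding loss_def by simp
  qed
qed

end
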